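(* Let $p$ be a prime. For $\gamma\in\mathbb{Z}^+$, $n\in\mathbb{N}$, $r\in\mathbb{Z}$ define $$S_{\gamma}^{(p)}(n,r)=p^{-\lfloor\frac{n-1}{p-1}\rfloor}\sum_{k\equiv r\ (\mathrm{mod}\ p^{\gamma})}\binom{p^{\gamma-1}n}k(-1)^k.$$ Let $\alpha,\beta,n\in\mathbb{N}$ with $\alpha>\beta$ and let $r\in\mathbb{Z}$. Then $$S_{\alpha}^{(p)}(n,p^{\beta}r)\equiv S_{\alpha-\beta}^{(p)}(n,r)\pmod{p^{(2-\delta_{p,2})(\alpha-\beta-1)}},$$ where $\delta_{p,2}=1$ if $p=2$ and $0$ otherwise. If moreover $r\not\equiv0\pmod p$, then $\operatorname{ord}_p\big(S_{\alpha}^{(p)}(n,p^{\beta}r)\big)\geqslant\alpha-\beta-2$.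
   Context: The sum runs over all integers $k\equiv r\pmod{p^\gamma}$ with $\binom Nk=0$ unless $0\le k\le N$; $S_\gamma^{(p)}(n,r)$ is an integer. $\operatorname{ord}_p$ is the $p$-adic order. *)

theory Defs
  imports "HOL-Number_Theory.Number_Theory"
begin

definition S_exp :: "nat \<Rightarrow> nat \<Rightarrow> int" where
  "S_exp p n = (int n - 1) div (int p - 1)"

definition S_sum :: "nat \<Rightarrow> nat \<Rightarrow> nat \<Rightarrow> int \<Rightarrow> int" where
  "S_sum p \<gamma> n r =
     (\<Sum>k | k \<le> p ^ (\<gamma> - 1) * n \<and> [int k = r] (mod (int p ^ \<gamma>)).
        (-1) ^ k * int ((p ^ (\<gamma> - 1) * n) choose k))"

text \<open>S_gamma^(p)(n,r) = p^(-floor((n-1)/(p-1))) * sum; it is an integer, so when the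
  exponent is nonnegative we take the (exact) integer quotient.\<close>
definition S :: "nat \<Rightarrow> nat \<Rightarrow> nat \<Rightarrow> int \<Rightarrow> int" where
  "S p \<gamma> n r =
     (if S_exp p n \<ge> 0 then S_sum p \<gamma> n r div (int p ^ nat (S_exp p n))
      else S_sum p \<gamma> n r * int p ^ nat (- S_exp p n))"

end

theory Submission
  imports Defs "HOL-Computational_Algebra.Polynomial"
begin

lemma falling_choose:
  assumes "M \<le> N"
  shows "fact M * (N choose M) = (\<Prod>j\<in>{1..M}. N - M + j)"
proof -
  have "fact M * fact (N - M) * (N choose M) = (fact N :: nat)"
    using binomial_fact_lemma[OF assms] by simp
  hence "fact N div (fact (N - M) :: nat) = (fact M * (N choose M) * fact (N - M)) div fact (N - M)"
    by (simp add: ac_simps)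
  hence "fact M * (N choose M) = fact N div (fact (N - M) :: nat)"
    by simp
  also have "\<dots> = \<Prod>{N - M + 1..N}" by (rule fact_div_fact) simp
  also have "\<dots> = (\<Prod>j\<in>{1..M}. N - M + j)"
  proof -
    have e: "{N - M + 1..N} = {1 + (N-M)..M + (N-M)}" using assms by auto
    have "\<Prod>{N - M + 1..N} = (\<Prod>j\<in>{1..M}. j + (N - M))"
      unfolding e by (rule prod.shift_bounds_cl_nat_ivl)
    thus ?thesis by (simp add: add.commute)
  qed
  finally show ?thesis .
qed

lemma mult_image_eq:
  assumes "p > (0::nat)"
  shows "{j\<in>{1..p*i}. p dvd j} = (\<lambda>l. p*l) ` {1..i}"
proof -
  have "j \<in> (\<lambda>l. p*l) ` {1..i}" if "j \<in> {1..p*i}" "p dvd j" for j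
  proof -
    from that obtain l where l: "j = p*l" by (auto simp: dvd_def)
    with that assms have "l \<in> {1..i}" by auto
    with l show ?thesis by blast
  qed
  moreover have "j \<in> {j\<in>{1..p*i}. p dvd j}" if "j \<in> (\<lambda>l. p*l) ` {1..i}" for j
    using that assms by auto
  ultimately show ?thesis by blast
qed

lemma split_falling:
  assumes p: "p > (0::nat)" and iN: "i \<le> N'"
  shows "fact (p*i) * (p*N' choose (p*i)) =
    (\<Prod>j\<in>{j\<in>{1..p*i}. \<not> p dvd j}. p*N' - p*i + j) * (p^i * (fact i * (N' choose i)))"
proof -
  let ?f = "\<lambda>j. p*N' - p*i + j"
  have le: "p*i \<le> p*N'" using iN by simp
  have "fact (p*i) * (p*N' choose (p*i)) = (\<Prod>j\<in>{1..p*i}. ?f j)"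
    by (rule falling_choose[OF le])
  also have "{1..p*i} = {j\<in>{1..p*i}. \<not> p dvd j} \<union> {j\<in>{1..p*i}. p dvd j}" by auto
  also have "prod ?f \<dots> = prod ?f {j\<in>{1..p*i}. \<not> p dvd j} * prod ?f {j\<in>{1..p*i}. p dvd j}"
    by (rule prod.union_disjoint) auto
  also have "prod ?f {j\<in>{1..p*i}. p dvd j} = prod ?f ((\<lambda>l. p*l) ` {1..i})"
    using mult_image_eq[OF p] by simp
  also have "\<dots> = (\<Prod>l\<in>{1..i}. ?f (p*l))"
    by (subst prod.reindex) (use p in \<open>auto simp: inj_on_def\<close>)
  also have "\<dots> = (\<Prod>l\<in>{1..i}. p * (N' - i + l))"
  proof (rule prod.cong)
    fix l assume "l \<in> {1..i}"
    thus "?f (p*l) = p * (N' - i + l)" using iN by (simp add: algebra_simps diff_mult_distrib2)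
  qed simp
  also have "\<dots> = p^i * (\<Prod>l\<in>{1..i}. N' - i + l)"
    by (simp add: prod.distrib)
  also have "(\<Prod>l\<in>{1..i}. N' - i + l) = fact i * (N' choose i)"
    by (rule falling_choose[OF iN, symmetric])
  finally show ?thesis .
qed

lemma card_nonmult:
  assumes p: "p > (0::nat)"
  shows "card {j\<in>{1..p*i}. \<not> p dvd j} = p*i - i"
proof -
  have "card {j\<in>{1..p*i}. p dvd j} = i"
    unfolding mult_image_eq[OF p] by (subst card_image) (use p in \<open>auto simp: inj_on_def\<close>)
  moreover have "card {j\<in>{1..p*i}. \<not> p dvd j} + card {j\<in>{1..p*i}. p dvd j} = card {1..p*i}"
  proof -
    have "{j\<in>{1..p*i}. \<not> p dvd j} \<union> {j\<in>{1..p*i}. p dvd j} = {1..p*i}" by auto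
    thus ?thesis by (subst card_Un_disjoint[symmetric]) auto
  qed
  ultimately show ?thesis by simp
qed

lemma binom_cong_step:
  assumes pp: "prime p" and odd: "odd p" and k: "k \<ge> 1"
  shows "int p ^ (2*k - 1) dvd int (p^k choose (p*i)) - int (p^(k-1) choose i)"
proof (cases "i = 0")
  case True thus ?thesis by simp
next
  case i0: False
  have p0: "p > 0" using pp prime_gt_0_nat by blast
  have pk: "p^k = p * p^(k-1)" using k by (cases k) auto
  show ?thesis
  proof (cases "i \<le> p^(k-1)")
    case False
    hence lt: "p^k < p*i" using pk p0 by simp
    have a: "(p^k choose (p*i)) = 0" by (rule binomial_eq_0) (rule lt)
    have b: "(p^(k-1) choose i) = 0" by (rule binomial_eq_0) (use False in simp)
    show ?thesis by (simp only: a b) simp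
  next
    case iN: True
    define M where "M = p*i"
    define R0 where "R0 = {j\<in>{1..M}. \<not> p dvd j}"
    define L where "L = (\<Prod>j\<in>R0. j)"
    define Pn where "Pn = (\<lambda>t::int. \<Prod>j\<in>R0. t - int M + int j)"
    define c where "c = (p^(k-1) choose i)"
    define C1 where "C1 = (p^k choose M)"
    have Mle: "M \<le> p^k" unfolding M_def pk using iN by simp
    have eq1: "fact M * C1 = (\<Prod>j\<in>R0. p^k - M + j) * (p^i * (fact i * c))"
      unfolding M_def R0_def C1_def c_def pk by (rule split_falling[OF p0 iN])
    have eq2: "fact M * (M choose M) = L * (p^i * (fact i * (i choose i)))"
      unfolding M_def R0_def L_def using split_falling[OF p0 le_refl, of i] by simp
    have X0: "p^i * fact i \<noteq> (0::nat)" using p0 by simp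
    have "L * C1 * (p^i * fact i) = (\<Prod>j\<in>R0. p^k - M + j) * c * (p^i * fact i)"
      using eq1 eq2 by (simp add: ac_simps)
    hence eqn: "L * C1 = (\<Prod>j\<in>R0. p^k - M + j) * c"
      using X0 by (metis mult_right_cancel)
    have R0M: "\<And>j. j \<in> R0 \<Longrightarrow> j \<le> M" unfolding R0_def by auto
    have "int (\<Prod>j\<in>R0. p^k - M + j) = Pn (int p ^ k)"
      unfolding Pn_def of_nat_prod using Mle by (intro prod.cong) auto
    hence eqi: "int L * int C1 = Pn (int p ^ k) * int c"
      using arg_cong[OF eqn, of int] by simp
    have PnM: "Pn (int M) = int L" unfolding Pn_def L_def by simp
    have finR0: "finite R0" unfolding R0_def by simp
    have Pn0: "Pn 0 = Pn (int M)"
    proof -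
      have "Pn 0 = (\<Prod>j\<in>R0. - int (M - j))"
        unfolding Pn_def using R0M by (intro prod.cong) auto
      also have "\<dots> = (-1) ^ card R0 * (\<Prod>j\<in>R0. int (M - j))"
        by (rule prod_uminus)
      also have "even (card R0)"
      proof -
        have "card R0 = p*i - i" unfolding R0_def M_def by (rule card_nonmult[OF p0])
        also have "\<dots> = (p - 1) * i" by (simp add: diff_mult_distrib)
        finally show ?thesis using odd p0 by simp
      qed
      hence "(-1::int) ^ card R0 = 1" by simp
      also have "(\<Prod>j\<in>R0. int (M - j)) = (\<Prod>j\<in>R0. int j)"
      proof -
        have inv: "M - j \<in> R0 \<and> M - (M - j) = j" if j: "j \<in> R0" for j
        proof -
          from j have j1: "1 \<le> j" "j \<le> M" and nd: "\<not> p dvd j" unfolding R0_def by auto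
          have pM: "p dvd M" unfolding M_def by simp
          have "j \<noteq> M" using nd pM by auto
          hence "1 \<le> M - j" using j1 by simp
          moreover have "\<not> p dvd (M - j)"
          proof
            assume "p dvd (M - j)"
            hence "p dvd M - (M - j)" using pM by (simp add: dvd_diff_nat)
            thus False using nd j1 by simp
          qed
          ultimately show ?thesis unfolding R0_def using j1 by simp
        qed
        show ?thesis
          by (rule prod.reindex_bij_witness[of _ "\<lambda>j. M - j" "\<lambda>j. M - j"]) (simp_all add: inv)
      qed
      finally show ?thesis unfolding Pn_def by simp
    qed
    define Gp where "Gp = (\<Prod>j\<in>R0. [:int j - int M, 1:])"
    have polyG: "poly Gp t = Pn t" for t unfolding Gp_def Pn_def by (simp add: poly_prod algebra_simps)
    obtain c0 Gq where G1: "Gp = pCons c0 Gq" by (cases Gp) auto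
    obtain c1 Q where G2: "Gq = pCons c1 Q" by (cases Gq) auto
    have Pnt: "Pn t = c0 + t * (c1 + t * poly Q t)" for t
      using polyG[of t] unfolding G1 G2 by simp
    have M0: "int M \<noteq> 0" unfolding M_def using p0 i0 by simp
    have "int M * (c1 + int M * poly Q (int M)) = 0"
      using Pn0 Pnt[of 0] Pnt[of "int M"] by simp
    hence "c1 + int M * poly Q (int M) = 0" using M0 by (simp only: mult_eq_0_iff) simp
    hence "c1 = - int M * poly Q (int M)" by (simp add: algebra_simps)
    hence w: "c1 = int p * int i * (- poly Q (int M))" unfolding M_def by simp
    define w where "w = - poly Q (int M)"
    obtain a' where a': "p^(k-1) = Suc a'" using p0 by (metis gr0_conv_Suc zero_less_power)
    obtain b where b: "i = Suc b" using i0 by (metis not0_implies_Suc)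
    have "Suc b * (Suc a' choose Suc b) = Suc a' * (a' choose b)" by (rule Suc_times_binomial)
    hence "i * c = p^(k-1) * (a' choose b)" unfolding c_def a' b .
    hence ic: "int i * int c = int p ^ (k-1) * int (a' choose b)"
      by (metis of_nat_mult of_nat_power)
    have key: "int L * (int C1 - int c) = int c * (Pn (int p ^ k) - Pn 0)"
      using eqi PnM Pn0 by (simp add: algebra_simps)
    also have "\<dots> = int c * (int p ^ k * (c1 + int p ^ k * poly Q (int p ^ k)))"
      using Pnt[of "int p ^ k"] Pnt[of 0] by simp
    also have "\<dots> = int p ^ k * int p ^ (k-1) * (int p * w * int (a' choose b))
        + int p ^ k * int p ^ k * (int c * poly Q (int p ^ k))"
      using ic unfolding w w_def[symmetric] by (simp add: algebra_simps)
    finally have key2: "int L * (int C1 - int c) = int p ^ (2*k-1) * (int p * w * int (a' choose b))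
        + int p ^ (2*k - 1) * (int p * (int c * poly Q (int p ^ k)))"
    proof -
      assume h: "int L * (int C1 - int c) = int p ^ k * int p ^ (k-1) * (int p * w * int (a' choose b))
        + int p ^ k * int p ^ k * (int c * poly Q (int p ^ k))"
      have e1: "int p ^ k * int p ^ (k-1) = (int p ^ (2*k-1) :: int)"
        using k by (simp add: power_add[symmetric] mult_2)
      have e2: "int p ^ k * int p ^ k = (int p ^ (2*k-1) * int p :: int)" using k
        by (simp add: power_add[symmetric] power_Suc2[symmetric] mult_2)
      show ?thesis using h unfolding e1 e2 by (simp add: algebra_simps)
    qed
    hence dv: "int p ^ (2*k-1) dvd int L * (int C1 - int c)" by simp
    have "coprime (int p ^ (2*k-1)) (int L)"
    proof -
      have "coprime (int p) (int j)" if "j \<in> R0" for j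
        using that pp unfolding R0_def by (simp add: prime_imp_coprime)
      hence "coprime (int p) (int L)" unfolding L_def of_nat_prod by (intro prod_coprime_right) auto
      thus ?thesis by simp
    qed
    hence "int p ^ (2*k-1) dvd int C1 - int c" using dv by (simp add: coprime_dvd_mult_right_iff)
    thus ?thesis unfolding C1_def c_def M_def .
  qed
qed

lemma binom_cong_chain:
  assumes pp: "prime p" and odd: "odd p"
  shows "b \<le> k \<Longrightarrow> int p ^ (2*(k-b)+1) dvd int (p^k choose (p^b * i)) - int (p^(k-b) choose i)"
proof (induction b arbitrary: k)
  case 0 thus ?case by simp
next
  case (Suc b)
  hence k1: "k \<ge> 1" and bk: "b \<le> k - 1" by auto
  have s1: "int p ^ (2*k - 1) dvd int (p^k choose (p * (p^b * i))) - int (p^(k-1) choose (p^b * i))"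
    by (rule binom_cong_step[OF pp odd k1])
  have s2: "int p ^ (2*(k-1-b)+1) dvd int (p^(k-1) choose (p^b * i)) - int (p^(k-1-b) choose i)"
    by (rule Suc.IH[OF bk])
  have le: "2*(k - Suc b)+1 \<le> 2*k - 1" using Suc.prems by simp
  have s1': "int p ^ (2*(k - Suc b)+1) dvd int (p^k choose (p * (p^b * i))) - int (p^(k-1) choose (p^b * i))"
    by (rule dvd_trans[OF le_imp_power_dvd[OF le] s1])
  have e: "k - 1 - b = k - Suc b" by simp
  have "int p ^ (2*(k - Suc b)+1) dvd (int (p^k choose (p * (p^b * i))) - int (p^(k-1) choose (p^b * i)))
       + (int (p^(k-1) choose (p^b * i)) - int (p^(k-1-b) choose i))"
    using s1' s2 unfolding e by (rule dvd_add)
  thus ?case by (simp add: e mult.assoc)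
qed

definition cls :: "nat \<Rightarrow> int poly \<Rightarrow> int \<Rightarrow> int" where
  "cls m f s = (\<Sum>k\<le>degree f. if [int k = s] (mod int m) then coeff f k else 0)"

lemma cls_bound:
  assumes "degree f \<le> B"
  shows "cls m f s = (\<Sum>k\<le>B. if [int k = s] (mod int m) then coeff f k else 0)"
  unfolding cls_def
  by (rule sum.mono_neutral_left) (use assms in \<open>auto simp: coeff_eq_0\<close>)

lemma cls_add: "cls m (f + g) s = cls m f s + cls m g s"
proof -
  let ?B = "max (degree f) (degree g)"
  have "degree (f + g) \<le> ?B" by (rule degree_add_le) auto
  thus ?thesis
    by (auto simp: cls_bound[of _ ?B] sum.distrib[symmetric] intro!: sum.cong)
qed

lemma cls_minus: "cls m (- f) s = - cls m f s"
  unfolding cls_def by (auto simp: sum_negf[symmetric] intro!: sum.cong)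

lemma cls_diff: "cls m (f - g) s = cls m f s - cls m g s"
  using cls_add[of m f "- g" s] cls_minus[of m g s] by simp

lemma cls_zero [simp]: "cls m 0 s = 0"
  unfolding cls_def by (intro sum.neutral) simp

lemma cls_sum: "cls m (\<Sum>i\<in>A. f i) s = (\<Sum>i\<in>A. cls m (f i) s)"
  by (induction A rule: infinite_finite_induct) (simp_all add: cls_add)

lemma cls_monom: "cls m (monom c k) s = (if [int k = s] (mod int m) then c else 0)"
proof -
  have "cls m (monom c k) s = (\<Sum>j\<le>k. if [int j = s] (mod int m) then coeff (monom c k) j else 0)"
    by (rule cls_bound) (rule degree_monom_le)
  also have "\<dots> = (\<Sum>j\<in>{k}. if [int j = s] (mod int m) then coeff (monom c k) j else 0)"
    by (rule sum.mono_neutral_right) auto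
  finally show ?thesis by simp
qed

lemma cls_sum_monom:
  "cls m (\<Sum>i\<in>A. monom (c i) (e i)) s = (\<Sum>i\<in>A. if [int (e i) = s] (mod int m) then c i else 0)"
  by (simp add: cls_sum cls_monom)

lemma cls_cong:
  assumes "[s = s'] (mod int m)"
  shows "cls m f s = cls m f s'"
proof -
  have "[int k = s] (mod int m) \<longleftrightarrow> [int k = s'] (mod int m)" for k
    using assms cong_trans cong_sym by metis
  thus ?thesis unfolding cls_def by simp
qed

lemma cls_monom_mult: "cls m (monom c a * g) s = c * cls m g (s - int a)"
proof -
  have "monom c a * g = monom c a * (\<Sum>b\<le>degree g. monom (coeff g b) b)"
    by (simp add: poly_as_sum_of_monoms)
  also have "\<dots> = (\<Sum>b\<le>degree g. monom (c * coeff g b) (a + b))"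
    by (simp add: sum_distrib_left mult_monom)
  finally have "cls m (monom c a * g) s = (\<Sum>b\<le>degree g. if [int (a + b) = s] (mod int m) then c * coeff g b else 0)"
    by (simp add: cls_sum_monom)
  also have "\<dots> = c * (\<Sum>b\<le>degree g. if [int b = s - int a] (mod int m) then coeff g b else 0)"
  proof -
    have "[int (a + b) = s] (mod int m) \<longleftrightarrow> [int b = s - int a] (mod int m)" for b
      by (simp add: cong_iff_dvd_diff algebra_simps)
    thus ?thesis by (auto simp: sum_distrib_left intro!: sum.cong)
  qed
  finally show ?thesis unfolding cls_def .
qed

lemma regroup:
  assumes m: "m > 0" and per: "\<And>t t'. [t = t'] (mod int m) \<Longrightarrow> \<phi> t = \<phi> t'"
  shows "(\<Sum>k\<le>degree f. coeff f k * \<phi> (int k)) = (\<Sum>t<m. cls m f (int t) * \<phi> (int t))"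
proof -
  have "(\<Sum>t<m. cls m f (int t) * \<phi> (int t))
      = (\<Sum>t<m. \<Sum>k\<le>degree f. if [int k = int t] (mod int m) then coeff f k * \<phi> (int t) else 0)"
    unfolding cls_def by (auto simp: sum_distrib_right intro!: sum.cong)
  also have "\<dots> = (\<Sum>k\<le>degree f. \<Sum>t<m. if [int k = int t] (mod int m) then coeff f k * \<phi> (int t) else 0)"
    by (rule sum.swap)
  also have "\<dots> = (\<Sum>k\<le>degree f. coeff f k * \<phi> (int k))"
  proof (rule sum.cong[OF refl])
    fix k
    have "(\<Sum>t<m. if [int k = int t] (mod int m) then coeff f k * \<phi> (int t) else 0)
        = (\<Sum>t\<in>{k mod m}. if [int k = int t] (mod int m) then coeff f k * \<phi> (int t) else 0)"
    proof (rule sum.mono_neutral_right)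
      show "{k mod m} \<subseteq> {..<m}" using m by simp
      show "\<forall>t\<in>{..<m} - {k mod m}. (if [int k = int t] (mod int m) then coeff f k * \<phi> (int t) else 0) = 0"
      proof
        fix t assume t: "t \<in> {..<m} - {k mod m}"
        have "\<not> [int k = int t] (mod int m)"
        proof
          assume "[int k = int t] (mod int m)"
          hence "[k = t] (mod m)" by (simp add: cong_int_iff)
          hence "k mod m = t mod m" by (simp add: cong_def)
          moreover from t have "t < m" "t \<noteq> k mod m" by auto
          ultimately show False by simp
        qed
        thus "(if [int k = int t] (mod int m) then coeff f k * \<phi> (int t) else 0) = 0" by simp
      qed
    qed simp
    also have "\<dots> = coeff f k * \<phi> (int (k mod m))"
    proof -
      have "[int k = int (k mod m)] (mod int m)"
        by (simp add: cong_def zmod_int)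
      thus ?thesis by simp
    qed
    also have "\<phi> (int (k mod m)) = \<phi> (int k)"
      by (rule per) (simp add: cong_def zmod_int)
    finally show "(\<Sum>t<m. if [int k = int t] (mod int m) then coeff f k * \<phi> (int t) else 0) = coeff f k * \<phi> (int k)" .
  qed
  finally show ?thesis by simp
qed

lemma cls_mult:
  assumes m: "m > 0"
  shows "cls m (f * g) s = (\<Sum>t<m. cls m f (int t) * cls m g (s - int t))"
proof -
  have "f * g = (\<Sum>a\<le>degree f. monom (coeff f a) a * g)"
    by (subst (1) poly_as_sum_of_monoms[symmetric]) (simp add: sum_distrib_right)
  hence "cls m (f * g) s = (\<Sum>a\<le>degree f. coeff f a * cls m g (s - int a))"
    by (simp add: cls_sum cls_monom_mult)
  also have "\<dots> = (\<Sum>t<m. cls m f (int t) * cls m g (s - int t))"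
  proof (rule regroup[OF m, where \<phi> = "\<lambda>t. cls m g (s - t)"])
    fix t t' :: int assume "[t = t'] (mod int m)"
    hence "[s - t = s - t'] (mod int m)" by (simp add: cong_diff)
    thus "cls m g (s - t) = cls m g (s - t')" by (rule cls_cong)
  qed
  finally show ?thesis .
qed

definition Dv :: "nat \<Rightarrow> nat \<Rightarrow> nat \<Rightarrow> int poly \<Rightarrow> bool" where
  "Dv p m c f \<longleftrightarrow> (\<forall>s. int p ^ c dvd cls m f s)"

lemma Dv_0 [simp]: "Dv p m 0 f" unfolding Dv_def by simp

lemma Dv_zero [simp]: "Dv p m c 0" unfolding Dv_def by simp

lemma Dv_mono: "c' \<le> c \<Longrightarrow> Dv p m c f \<Longrightarrow> Dv p m c' f"
  unfolding Dv_def using le_imp_power_dvd dvd_trans by blast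

lemma Dv_add: "Dv p m c f \<Longrightarrow> Dv p m c g \<Longrightarrow> Dv p m c (f + g)"
  unfolding Dv_def by (simp add: cls_add)

lemma Dv_diff: "Dv p m c f \<Longrightarrow> Dv p m c g \<Longrightarrow> Dv p m c (f - g)"
  unfolding Dv_def by (simp add: cls_diff)

lemma Dv_minus: "Dv p m c f \<Longrightarrow> Dv p m c (- f)"
  unfolding Dv_def by (simp add: cls_minus)

lemma Dv_sum: "(\<And>i. i \<in> A \<Longrightarrow> Dv p m c (f i)) \<Longrightarrow> Dv p m c (\<Sum>i\<in>A. f i)"
  unfolding Dv_def by (simp add: cls_sum dvd_sum)

lemma Dv_mult:
  assumes m: "m > 0" and f: "Dv p m a f" and g: "Dv p m b g"
  shows "Dv p m (a + b) (f * g)"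
  unfolding Dv_def
proof
  fix s
  show "int p ^ (a + b) dvd cls m (f * g) s"
    unfolding cls_mult[OF m] power_add
    by (intro dvd_sum mult_dvd_mono) (use f g in \<open>auto simp: Dv_def\<close>)
qed

lemma Dv_multR: "m > 0 \<Longrightarrow> Dv p m a f \<Longrightarrow> Dv p m a (f * g)"
  using Dv_mult[of m p a f 0 g] by simp

lemma Dv_multL: "m > 0 \<Longrightarrow> Dv p m a g \<Longrightarrow> Dv p m a (f * g)"
  using Dv_mult[of m p 0 f a g] by simp

lemma Dv_Ppow: "Dv p m c ([:int p:] ^ c)"
proof -
  have "[:int p:] ^ c = monom (int p ^ c) 0" by (simp add: monom_0[symmetric] monom_power)
  thus ?thesis unfolding Dv_def by (simp add: cls_monom)
qed

lemma Dv_dvd: "m > 0 \<Longrightarrow> [:int p:] ^ c dvd f \<Longrightarrow> Dv p m c f"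
  using Dv_multR[OF _ Dv_Ppow] by (auto elim!: dvdE)

lemma Dv_pow: "m > 0 \<Longrightarrow> Dv p m a f \<Longrightarrow> Dv p m (a * n) (f ^ n)"
proof (induction n)
  case 0 thus ?case by simp
next
  case (Suc n)
  hence "Dv p m (a + a * n) (f * f ^ n)" by (intro Dv_mult) auto
  thus ?case by (simp add: algebra_simps)
qed

lemma Dv_xm1:
  assumes m: "m > 0"
  shows "Dv p m c ((monom 1 m - 1) * h)"
proof -
  have "cls m (monom 1 m - 1) t = 0" for t
  proof -
    have "[int m = t] (mod int m) \<longleftrightarrow> [0 = t] (mod int m)"
      by (simp add: cong_def)
    moreover have "cls m 1 t = (if [0 = t] (mod int m) then 1 else 0)"
      using cls_monom[of m 1 0 t] by simp
    ultimately show ?thesis by (simp add: cls_diff cls_monom)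
  qed
  thus ?thesis unfolding Dv_def by (simp add: cls_mult[OF m])
qed

lemma div_add_le_nat: "d \<ge> 1 \<Longrightarrow> (x + y) div d \<le> x div d + (y::nat)"
proof -
  assume d: "d \<ge> 1"
  have "(x + y) div d \<le> (x + y * d) div d" using d by (intro div_le_mono) simp
  also have "\<dots> = x div d + y" using d by simp
  finally show ?thesis .
qed

lemma dvd_pow_diff: "(x - y :: 'a :: comm_ring_1) dvd x ^ n - y ^ n"
proof (induction n)
  case 0 thus ?case by simp
next
  case (Suc n)
  have "x ^ Suc n - y ^ Suc n = x * (x ^ n - y ^ n) + (x - y) * y ^ n" by (simp add: algebra_simps)
  thus ?case using Suc by simp
qed

lemma binom_mid_dvd:
  assumes pp: "prime p"
  shows "[:int p:] * u dvd (1 - u) ^ p - 1 - (- u) ^ p"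
proof -
  have p1: "p \<ge> 1" using pp prime_ge_1_nat by blast
  have "(1 - u) ^ p = ((- u) + 1) ^ p" by simp
  also have "\<dots> = (\<Sum>j\<le>p. of_nat (p choose j) * (- u) ^ j * 1 ^ (p - j))"
    by (rule binomial_ring)
  also have "{..p} = insert 0 (insert p {1..<p})" using p1 by auto
  finally have "(1 - u) ^ p - 1 - (- u) ^ p = (\<Sum>j\<in>{1..<p}. of_nat (p choose j) * (- u) ^ j)"
    using p1 by simp
  also have "[:int p:] * u dvd \<dots>"
  proof (rule dvd_sum)
    fix j assume j: "j \<in> {1..<p}"
    hence "p dvd (p choose j)" using pp by (intro dvd_choose_prime) auto
    then obtain d where d: "(p choose j) = p * d" by (auto elim: dvdE)
    have "(- u) ^ j = u * (- ((- u) ^ (j - 1)))" using j by (cases j) auto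
    hence eq: "of_nat (p choose j) * (- u) ^ j = [:int p:] * u * (of_nat d * (- ((- u) ^ (j - 1))))"
      unfolding d by (simp add: of_nat_poly algebra_simps)
    show "[:int p:] * u dvd of_nat (p choose j) * (- u) ^ j" unfolding eq by (rule dvd_triv_left)
  qed
  finally show ?thesis .
qed

lemma pow_neg_swap: "(u::'a::comm_ring_1) ^ n = (-1) ^ n * (- u) ^ n"
proof -
  have "(-1) ^ n * (- u) ^ n = ((-1) * (- u)) ^ n" by (rule power_mult_distrib[symmetric])
  thus ?thesis by simp
qed

lemma prime_two_or_odd: "prime (p::nat) \<Longrightarrow> p = 2 \<or> odd p"
proof -
  assume pp: "prime p"
  hence "p \<ge> 2" by (rule prime_ge_2_nat)
  thus ?thesis using prime_odd_nat[OF pp] by linarith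
qed

context
  fixes p q m :: nat and u :: "int poly"
  assumes pp: "prime p" and q0: "q > 0" and mdef: "m = p * q" and udef: "u = 1 - monom 1 q"
begin

lemma m0: "m > 0" using pp q0 mdef prime_gt_0_nat by simp

lemma U_step:
  assumes "Dv p m c (u * g)"
  shows "Dv p m (c + 1) (u ^ p * g)"
proof -
  obtain h where h: "(1 - u) ^ p - 1 - (- u) ^ p = [:int p:] * u * h"
    using binom_mid_dvd[OF pp, of u] by (auto elim: dvdE)
  have X: "(1 - u) ^ p = monom 1 m" unfolding udef mdef by (simp add: monom_power mult.commute)
  have nu: "(- u) ^ p = (monom 1 m - 1) - [:int p:] * u * h"
    using h X by (simp add: h[symmetric] algebra_simps)
  have eq: "u ^ p * g = (monom 1 m - 1) * ((-1) ^ p * g) - [:int p:] * (u * g) * ((-1) ^ p * h)"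
    by (subst pow_neg_swap) (simp add: nu algebra_simps)
  have "Dv p m (1 + c) ([:int p:] * (u * g))"
    by (rule Dv_mult[OF m0 _ assms]) (use Dv_Ppow[of p m 1] in simp)
  hence A: "Dv p m (c + 1) ([:int p:] * (u * g))" by (simp only: add.commute)
  have "Dv p m (c + 1) ([:int p:] * (u * g) * ((-1) ^ p * h))"
    by (rule Dv_multR[OF m0 A])
  thus ?thesis unfolding eq by (intro Dv_diff Dv_xm1 m0)
qed

lemma U_pow: "Dv p m t (u ^ (1 + (p - 1) * t) * g)"
proof (induction t arbitrary: g)
  case 0 thus ?case by simp
next
  case (Suc t)
  have p2: "p \<ge> 2" using pp prime_ge_2_nat by blast
  have "p + (p - 1) * t = 1 + (p - 1) * Suc t" using p2 by (cases p) (auto simp: algebra_simps)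
  hence eqn: "u ^ (1 + (p - 1) * Suc t) * g = u ^ p * (u ^ ((p - 1) * t) * g)"
    by (simp only: mult.assoc[symmetric] power_add[symmetric])
  have "Dv p m t (u * (u ^ ((p - 1) * t) * g))"
    using Suc.IH[of g] by (simp add: mult.assoc)
  hence "Dv p m (t + 1) (u ^ p * (u ^ ((p - 1) * t) * g))" by (rule U_step)
  thus ?case unfolding eqn by simp
qed

lemma U_bound:
  assumes b: "b \<ge> 1"
  shows "Dv p m ((b - 1) div (p - 1)) (u ^ b)"
proof -
  define t where "t = (b - 1) div (p - 1)"
  define r where "r = (b - 1) mod (p - 1)"
  have "b = 1 + (p - 1) * t + r" unfolding t_def r_def using b by simp
  hence "u ^ b = u ^ (1 + (p - 1) * t) * u ^ r" by (metis power_add)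
  thus ?thesis using U_pow[of t "u ^ r"] unfolding t_def by simp
qed

lemma J_bound:
  assumes Z: "Z = u + [:int p:] * a"
  shows "Dv p m ((N - 1) div (p - 1)) (Z ^ N)"
proof -
  have p2: "p \<ge> 2" using pp prime_ge_2_nat by blast
  have "Z ^ N = (\<Sum>b\<le>N. of_nat (N choose b) * u ^ b * ([:int p:] * a) ^ (N - b))"
    unfolding Z by (rule binomial_ring)
  also have "Dv p m ((N - 1) div (p - 1)) \<dots>"
  proof (rule Dv_sum)
    fix b assume b: "b \<in> {..N}"
    have Pa: "Dv p m (N - b) (([:int p:] * a) ^ (N - b))"
      unfolding power_mult_distrib by (rule Dv_multR[OF m0 Dv_Ppow])
    show "Dv p m ((N - 1) div (p - 1)) (of_nat (N choose b) * u ^ b * ([:int p:] * a) ^ (N - b))"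
    proof (cases "b = 0")
      case True
      have "(N - 1) div (p - 1) \<le> N"
        using div_le_dividend[of "N - 1" "p - 1"] diff_le_self[of N 1] by (rule le_trans)
      hence "(N - 1) div (p - 1) \<le> N - b" unfolding True by simp
      from Dv_mono[OF this Pa] have "Dv p m ((N - 1) div (p - 1)) (of_nat (N choose b) * (u ^ b * ([:int p:] * a) ^ (N - b)))"
        unfolding True by (intro Dv_multL[OF m0]) simp
      thus ?thesis by (simp only: mult.assoc)
    next
      case False
      have D1: "Dv p m ((b - 1) div (p - 1) + (N - b)) (u ^ b * ([:int p:] * a) ^ (N - b))"
        by (rule Dv_mult[OF m0 U_bound Pa]) (use False in simp)
      have le: "(N - 1) div (p - 1) \<le> (b - 1) div (p - 1) + (N - b)"
      proof -
        have "N - 1 = (b - 1) + (N - b)" using False b by simp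
        thus ?thesis using div_add_le_nat[of "p - 1" "b - 1" "N - b"] p2 by simp
      qed
      have "Dv p m ((N - 1) div (p - 1)) (u ^ b * ([:int p:] * a) ^ (N - b))"
        by (rule Dv_mono[OF le D1])
      hence "Dv p m ((N - 1) div (p - 1)) (of_nat (N choose b) * (u ^ b * ([:int p:] * a) ^ (N - b)))"
        by (rule Dv_multL[OF m0])
      thus ?thesis by (simp only: mult.assoc)
    qed
  qed
  finally show ?thesis .
qed

end

lemma frob1:
  assumes pp: "prime p"
  shows "[:int p:] dvd (1 - X) ^ p - (1 - X ^ p)"
proof -
  have a: "[:int p:] dvd (1 - X) ^ p - 1 - (- X) ^ p"
    using binom_mid_dvd[OF pp, of X] by (rule dvd_trans[OF dvd_triv_left])
  have b: "[:int p:] dvd (- X) ^ p + X ^ p"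
  proof (cases "p = 2")
    case True
    have c2: "[:int p:] = [:1:] + [:1:]" unfolding True by simp
    have eq: "(- X) ^ p + X ^ p = [:int p:] * X ^ p" unfolding c2 using True
      by (simp add: one_pCons[symmetric] distrib_right)
    show ?thesis unfolding eq by (rule dvd_triv_left)
  next
    case False
    hence "odd p" using prime_two_or_odd[OF pp] by simp
    hence "(- X) ^ p + X ^ p = 0" by simp
    thus ?thesis by simp
  qed
  have eqn: "(1 - X) ^ p - (1 - X ^ p) = ((1 - X) ^ p - 1 - (- X) ^ p) + ((- X) ^ p + X ^ p)"
    by (simp add: algebra_simps)
  show ?thesis unfolding eqn by (rule dvd_add[OF a b])
qed

lemma frob:
  assumes pp: "prime p"
  shows "[:int p:] dvd (1 - X) ^ (p ^ t) - (1 - X ^ (p ^ t))"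
proof (induction t)
  case 0 thus ?case by simp
next
  case (Suc t)
  let ?A = "(1 - X) ^ (p ^ t)" and ?B = "1 - X ^ (p ^ t)"
  have "[:int p:] dvd ?A ^ p - ?B ^ p"
    using Suc dvd_pow_diff by (rule dvd_trans)
  moreover have "[:int p:] dvd ?B ^ p - (1 - (X ^ (p ^ t)) ^ p)" by (rule frob1[OF pp])
  ultimately have "[:int p:] dvd (?A ^ p - ?B ^ p) + (?B ^ p - (1 - (X ^ (p ^ t)) ^ p))"
    by (rule dvd_add)
  moreover have "(?A ^ p - ?B ^ p) + (?B ^ p - (1 - (X ^ (p ^ t)) ^ p)) = ?A ^ p - (1 - (X ^ (p ^ t)) ^ p)"
    by simp
  ultimately have d: "[:int p:] dvd ?A ^ p - (1 - (X ^ (p ^ t)) ^ p)" by simp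
  have e1: "?A ^ p = (1 - X) ^ (p ^ Suc t)" and e2: "(X ^ (p ^ t)) ^ p = X ^ (p ^ Suc t)"
    by (simp_all add: power_mult[symmetric] mult.commute)
  show ?case using d unfolding e1 e2 .
qed

lemma lift1:
  assumes pp: "prime p" and d: "[:int p:] ^ (t + 1) dvd A - B"
  shows "[:int p:] ^ (t + 2) dvd A ^ p - B ^ p"
proof -
  let ?P = "[:int p:]"
  obtain H where H: "A = B + ?P ^ (t + 1) * H" using d by (auto elim!: dvdE simp: algebra_simps)
  have p1: "p \<ge> 1" using pp prime_ge_1_nat by blast
  have "A ^ p = (\<Sum>j\<le>p. of_nat (p choose j) * (?P ^ (t + 1) * H) ^ j * B ^ (p - j))"
    unfolding H by (subst add.commute) (rule binomial_ring)
  also have "{..p} = insert 0 {1..p}" by auto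
  finally have "A ^ p - B ^ p = (\<Sum>j\<in>{1..p}. of_nat (p choose j) * (?P ^ (t + 1) * H) ^ j * B ^ (p - j))"
    by simp
  also have "?P ^ (t + 2) dvd \<dots>"
  proof (rule dvd_sum)
    fix j assume j: "j \<in> {1..p}"
    show "?P ^ (t + 2) dvd of_nat (p choose j) * (?P ^ (t + 1) * H) ^ j * B ^ (p - j)"
    proof (cases "j = 1")
      case True
      have eq: "of_nat (p choose j) * (?P ^ (t + 1) * H) ^ j * B ^ (p - j) = ?P ^ (t + 2) * (H * B ^ (p - 1))"
        unfolding True by (simp add: of_nat_poly power_Suc mult.assoc)
      show ?thesis unfolding eq by (rule dvd_triv_left)
    next
      case False
      hence "t + 2 \<le> (t + 1) * j" using j by (cases j) auto
      hence "?P ^ (t + 2) dvd ?P ^ ((t + 1) * j)" by (rule le_imp_power_dvd)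
      also have "?P ^ ((t + 1) * j) dvd (?P ^ (t + 1) * H) ^ j"
      proof -
        have "(?P ^ (t + 1) * H) ^ j = ?P ^ ((t + 1) * j) * H ^ j"
          by (simp only: power_mult_distrib power_mult)
        thus ?thesis by simp
      qed
      finally have "?P ^ (t + 2) dvd (?P ^ (t + 1) * H) ^ j" .
      hence "?P ^ (t + 2) dvd of_nat (p choose j) * (?P ^ (t + 1) * H) ^ j" by (rule dvd_mult)
      thus ?thesis by (rule dvd_mult2)
    qed
  qed
  finally show ?thesis .
qed

lemma lift:
  assumes pp: "prime p" and d: "[:int p:] dvd A - B"
  shows "[:int p:] ^ (s + 1) dvd A ^ (p ^ s) - B ^ (p ^ s)"
proof (induction s)
  case 0 thus ?case using d by simp
next
  case (Suc s)
  have "[:int p:] ^ (s + 2) dvd (A ^ (p ^ s)) ^ p - (B ^ (p ^ s)) ^ p"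
    by (rule lift1[OF pp Suc])
  thus ?case by (simp add: power_mult[symmetric] mult.commute)
qed

lemma binom_poly:
  "(1 - monom 1 e) ^ M = (\<Sum>i\<le>M. monom ((-1) ^ i * int (M choose i)) (e * i) :: int poly)"
proof -
  have "(1 - monom 1 e) ^ M = (- monom 1 e + 1 :: int poly) ^ M" by simp
  also have "\<dots> = (\<Sum>i\<le>M. of_nat (M choose i) * (- monom 1 e) ^ i * 1 ^ (M - i))"
    by (rule binomial_ring)
  also have "\<dots> = (\<Sum>i\<le>M. monom ((-1) ^ i * int (M choose i)) (e * i))"
  proof (rule sum.cong[OF refl])
    fix i
    have "(- monom 1 e :: int poly) = monom (-1) e" by (simp add: minus_monom)
    hence "(- monom 1 e :: int poly) ^ i = monom ((-1) ^ i) (e * i)" by (simp add: monom_power)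
    thus "of_nat (M choose i) * (- monom 1 e) ^ i * 1 ^ (M - i) = monom ((-1) ^ i * int (M choose i)) (e * i)"
      by (simp add: of_nat_monom mult_monom mult.commute)
  qed
  finally show ?thesis .
qed

lemma cls_binom:
  "cls m ((1 - monom 1 e) ^ M) s = (\<Sum>i\<le>M. if [int (e * i) = s] (mod int m) then (-1) ^ i * int (M choose i) else 0)"
  unfolding binom_poly by (rule cls_sum_monom)

lemma S_sum_cls:
  "S_sum p g n s = cls (p ^ g) ((1 - monom 1 1) ^ (p ^ (g - 1) * n)) s"
proof -
  let ?N = "p ^ (g - 1) * n"
  have "{k. k \<le> ?N \<and> [int k = s] (mod int p ^ g)} = {k\<in>{..?N}. [int k = s] (mod int (p ^ g))}" by auto
  hence "S_sum p g n s = (\<Sum>k\<in>{k\<in>{..?N}. [int k = s] (mod int (p ^ g))}. (-1) ^ k * int (?N choose k))"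
    unfolding S_sum_def by simp
  also have "\<dots> = (\<Sum>k\<le>?N. if [int k = s] (mod int (p ^ g)) then (-1) ^ k * int (?N choose k) else 0)"
    by (rule sum.inter_filter) simp
  also have "\<dots> = cls (p ^ g) ((1 - monom 1 1) ^ ?N) s"
    unfolding cls_binom by simp
  finally show ?thesis .
qed

lemma cls_of_nat_mult: "cls m (of_nat c * f) s = int c * cls m f s"
  using cls_monom_mult[of m "int c" 0 f s] by (simp add: of_nat_monom)

lemma cls_support:
  assumes "e dvd m" "\<not> int e dvd t"
  shows "cls m ((1 - monom 1 e) ^ M) t = 0"
  unfolding cls_binom
proof (intro sum.neutral ballI)
  fix i
  have "\<not> [int (e * i) = t] (mod int m)"
  proof
    assume "[int (e * i) = t] (mod int m)"
    hence "int m dvd int (e * i) - t" by (simp add: cong_iff_dvd_diff)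
    hence "int e dvd int (e * i) - t" using assms(1) by (meson dvd_trans int_dvd_int_iff)
    moreover have "int e dvd int (e * i)" by simp
    ultimately have "int e dvd int (e * i) - (int (e * i) - t)" by (rule dvd_diff[rotated])
    thus False using assms(2) by simp
  qed
  thus "(if [int (e * i) = t] (mod int m) then (-1) ^ i * int (M choose i) else 0) = 0" by simp
qed

lemma arith_cn: "d \<ge> 1 \<Longrightarrow> (n - 1) div d \<le> (n - j - 1) div d + (j::nat)"
proof -
  assume d: "d \<ge> 1"
  have "(n - 1) div d \<le> ((n - j - 1) + j) div d" by (intro div_le_mono) simp
  also have "\<dots> \<le> (n - j - 1) div d + j" by (rule div_add_le_nat[OF d])
  finally show ?thesis .
qed

lemma arith_kj: "(k::nat) \<ge> 1 \<Longrightarrow> j \<ge> a \<Longrightarrow> (k - 1) * a + j \<le> k * j"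
proof -
  assume k: "k \<ge> 1" and j: "j \<ge> a"
  have "(k - 1) * a \<le> (k - 1) * j" using j by (rule mult_le_mono2)
  moreover have "k * j = (k - 1) * j + j" using k by (cases k) auto
  ultimately show ?thesis by simp
qed

context
  fixes p \<alpha> \<beta> :: nat
  assumes pp: "prime p" and b1: "\<beta> \<ge> 1" and ba: "\<beta> < \<alpha>"
begin

lemma p0: "p > 0" using pp prime_gt_0_nat by blast
lemma p2: "p \<ge> 2" using pp prime_ge_2_nat by blast
lemma mq: "p ^ \<alpha> = p * p ^ (\<alpha> - 1)" using ba by (cases \<alpha>) auto
lemma q0: "p ^ (\<alpha> - 1) > 0" using p0 by simp
lemma m0': "p ^ \<alpha> > 0" using p0 by simp
lemma qsplit: "p ^ (\<alpha> - 1) = p ^ \<beta> * p ^ (\<alpha> - \<beta> - 1)"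
  using ba by (simp add: power_add[symmetric])

lemma qsplit2: "p ^ \<beta> * p ^ (\<alpha> - Suc \<beta>) = p ^ (\<alpha> - Suc 0)"
  using qsplit by simp

abbreviation "Yp \<equiv> (1 - monom 1 1 :: int poly) ^ (p ^ (\<alpha> - 1))"
abbreviation "Zp \<equiv> (1 - monom 1 (p ^ \<beta>) :: int poly) ^ (p ^ (\<alpha> - \<beta> - 1))"
abbreviation "Uu \<equiv> (1 - monom 1 (p ^ (\<alpha> - 1)) :: int poly)"

lemma Y_u: "\<exists>a. Yp = Uu + [:int p:] * a"
proof -
  have "[:int p:] dvd (1 - monom 1 1) ^ (p ^ (\<alpha> - 1)) - (1 - (monom 1 1 :: int poly) ^ (p ^ (\<alpha> - 1)))"
    by (rule frob[OF pp])
  moreover have "(monom 1 1 :: int poly) ^ (p ^ (\<alpha> - 1)) = monom 1 (p ^ (\<alpha> - 1))" by (simp add: monom_power)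
  ultimately obtain a where "Yp - Uu = [:int p:] * a" by (auto elim!: dvdE)
  hence "Yp = Uu + [:int p:] * a" by (simp add: algebra_simps)
  thus ?thesis by blast
qed

lemma Z_u: "\<exists>a. Zp = Uu + [:int p:] * a"
proof -
  have "[:int p:] dvd (1 - monom 1 (p ^ \<beta>)) ^ (p ^ (\<alpha> - \<beta> - 1)) - (1 - (monom 1 (p ^ \<beta>) :: int poly) ^ (p ^ (\<alpha> - \<beta> - 1)))"
    by (rule frob[OF pp])
  moreover have "(monom 1 (p ^ \<beta>) :: int poly) ^ (p ^ (\<alpha> - \<beta> - 1)) = monom 1 (p ^ (\<alpha> - 1))"
    by (simp add: monom_power qsplit2)
  ultimately obtain a where "Zp - Uu = [:int p:] * a" by (auto elim!: dvdE)
  hence "Zp = Uu + [:int p:] * a" by (simp add: algebra_simps)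
  thus ?thesis by blast
qed

lemma YZ: "[:int p:] ^ (\<alpha> - \<beta>) dvd Yp - Zp"
proof -
  have "[:int p:] dvd (1 - monom 1 1) ^ (p ^ \<beta>) - (1 - (monom 1 1 :: int poly) ^ (p ^ \<beta>))"
    by (rule frob[OF pp])
  moreover have "(monom 1 1 :: int poly) ^ (p ^ \<beta>) = monom 1 (p ^ \<beta>)" by (simp add: monom_power)
  ultimately have "[:int p:] dvd (1 - monom 1 1 :: int poly) ^ (p ^ \<beta>) - (1 - monom 1 (p ^ \<beta>))" by simp
  from lift[OF pp this, of "\<alpha> - \<beta> - 1"]
  have L: "[:int p:] ^ (\<alpha> - \<beta> - 1 + 1) dvd ((1 - monom 1 1 :: int poly) ^ (p ^ \<beta>)) ^ (p ^ (\<alpha> - \<beta> - 1)) - Zp" .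
  have e1: "((1 - monom 1 1 :: int poly) ^ (p ^ \<beta>)) ^ (p ^ (\<alpha> - \<beta> - 1)) = Yp"
    by (simp add: power_mult[symmetric] qsplit2)
  have e2: "\<alpha> - \<beta> - 1 + 1 = \<alpha> - \<beta>" using ba by simp
  show ?thesis using L unfolding e1 e2 .
qed

lemma J_Z: "Dv p (p ^ \<alpha>) ((N - 1) div (p - 1)) (Zp ^ N)"
proof -
  obtain a where a: "Zp = Uu + [:int p:] * a" using Z_u by blast
  show ?thesis by (rule J_bound[OF pp q0 mq refl a])
qed

lemma expand:
  assumes H: "Yp - Zp = [:int p:] ^ (\<alpha> - \<beta>) * H"
  shows "Yp ^ n - Zp ^ n = (\<Sum>j\<in>{1..n}. of_nat (n choose j) * ([:int p:] ^ (\<alpha> - \<beta>) * H) ^ j * Zp ^ (n - j))"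
proof -
  have "Yp = [:int p:] ^ (\<alpha> - \<beta>) * H + Zp" using H by (simp add: algebra_simps)
  hence "Yp ^ n = (\<Sum>j\<le>n. of_nat (n choose j) * ([:int p:] ^ (\<alpha> - \<beta>) * H) ^ j * Zp ^ (n - j))"
    by (simp add: binomial_ring)
  also have "{..n} = insert 0 {1..n}" by auto
  finally show ?thesis by simp
qed

lemma term_bound:
  assumes j: "j \<ge> 1"
  shows "Dv p (p ^ \<alpha>) ((\<alpha> - \<beta>) * j + (n - j - 1) div (p - 1))
           (of_nat (n choose j) * ([:int p:] ^ (\<alpha> - \<beta>) * H) ^ j * Zp ^ (n - j))"
proof -
  have A: "Dv p (p ^ \<alpha>) ((\<alpha> - \<beta>) * j) (([:int p:] ^ (\<alpha> - \<beta>) * H) ^ j)"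
    unfolding power_mult_distrib power_mult[symmetric] by (rule Dv_multR[OF m0' Dv_Ppow])
  have "Dv p (p ^ \<alpha>) ((\<alpha> - \<beta>) * j + (n - j - 1) div (p - 1))
          (([:int p:] ^ (\<alpha> - \<beta>) * H) ^ j * Zp ^ (n - j))"
    by (rule Dv_mult[OF m0' A J_Z])
  hence "Dv p (p ^ \<alpha>) ((\<alpha> - \<beta>) * j + (n - j - 1) div (p - 1))
          (of_nat (n choose j) * (([:int p:] ^ (\<alpha> - \<beta>) * H) ^ j * Zp ^ (n - j)))"
    by (rule Dv_multL[OF m0'])
  thus ?thesis by (simp only: mult.assoc)
qed

lemma weak:
  "Dv p (p ^ \<alpha>) ((n - 1) div (p - 1) + (\<alpha> - \<beta>) - 1) (Yp ^ n - Zp ^ n)"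
proof -
  obtain H where H: "Yp - Zp = [:int p:] ^ (\<alpha> - \<beta>) * H" using YZ by (auto elim!: dvdE)
  show ?thesis unfolding expand[OF H]
  proof (rule Dv_sum)
    fix j assume j: "j \<in> {1..n}"
    have le: "(n - 1) div (p - 1) + (\<alpha> - \<beta>) - 1 \<le> (\<alpha> - \<beta>) * j + (n - j - 1) div (p - 1)"
    proof -
      have "(n - 1) div (p - 1) \<le> (n - j - 1) div (p - 1) + j" using p2 by (intro arith_cn) simp
      moreover have "(\<alpha> - \<beta> - 1) * 1 + j \<le> (\<alpha> - \<beta>) * j" using ba j by (intro arith_kj) auto
      moreover have "\<alpha> - \<beta> \<ge> 1" using ba by simp
      ultimately show ?thesis by linarith
    qed
    show "Dv p (p ^ \<alpha>) ((n - 1) div (p - 1) + (\<alpha> - \<beta>) - 1)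
           (of_nat (n choose j) * ([:int p:] ^ (\<alpha> - \<beta>) * H) ^ j * Zp ^ (n - j))"
      by (rule Dv_mono[OF le term_bound]) (use j in simp)
  qed
qed

lemma delta_strong:
  assumes odd: "odd p" and s: "int p ^ \<beta> dvd s"
  shows "int p ^ (2 * (\<alpha> - \<beta>) - 1) dvd cls (p ^ \<alpha>) Yp s - cls (p ^ \<alpha>) Zp s"
proof -
  define q where "q = p ^ (\<alpha> - 1)"
  define Q where "Q = p ^ (\<alpha> - \<beta> - 1)"
  define F where "F k = (if [int (1 * k) = s] (mod int (p ^ \<alpha>)) then (-1) ^ k * int (q choose k) else 0)" for k
  define G where "G i = (if [int (p ^ \<beta> * i) = s] (mod int (p ^ \<alpha>)) then (-1) ^ i * int (Q choose i) else 0)" for i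
  have qQ: "q = p ^ \<beta> * Q" unfolding q_def Q_def by (rule qsplit)
  have cY: "cls (p ^ \<alpha>) Yp s = (\<Sum>k\<le>q. F k)" unfolding F_def q_def by (rule cls_binom)
  have cZ: "cls (p ^ \<alpha>) Zp s = (\<Sum>i\<le>Q. G i)" unfolding G_def Q_def by (rule cls_binom)
  have pbm: "int p ^ \<beta> dvd int (p ^ \<alpha>)" using ba by (simp add: le_imp_power_dvd)
  have Fz: "F k = 0" if nk: "\<not> p ^ \<beta> dvd k" for k
  proof -
    have "\<not> [int k = s] (mod int (p ^ \<alpha>))"
    proof
      assume "[int k = s] (mod int (p ^ \<alpha>))"
      hence "int (p ^ \<alpha>) dvd int k - s" by (simp add: cong_iff_dvd_diff)
      hence "int p ^ \<beta> dvd int k - s" using pbm dvd_trans by blast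
      hence "int p ^ \<beta> dvd (int k - s) + s" using s by (rule dvd_add)
      hence "int (p ^ \<beta>) dvd int k" by simp
      hence "p ^ \<beta> dvd k" by (simp only: int_dvd_int_iff)
      thus False using nk by simp
    qed
    thus ?thesis unfolding F_def by simp
  qed
  have "(\<Sum>k\<le>q. F k) = (\<Sum>k\<in>(\<lambda>i. p ^ \<beta> * i) ` {..Q}. F k)"
  proof (rule sum.mono_neutral_right)
    show "(\<lambda>i. p ^ \<beta> * i) ` {..Q} \<subseteq> {..q}" unfolding qQ by auto
    show "\<forall>k\<in>{..q} - (\<lambda>i. p ^ \<beta> * i) ` {..Q}. F k = 0"
    proof
      fix k assume k: "k \<in> {..q} - (\<lambda>i. p ^ \<beta> * i) ` {..Q}"
      have "\<not> p ^ \<beta> dvd k"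
      proof
        assume "p ^ \<beta> dvd k"
        then obtain i where i: "k = p ^ \<beta> * i" by (auto elim: dvdE)
        hence "p ^ \<beta> * i \<le> p ^ \<beta> * Q" using k unfolding qQ by simp
        hence "i \<le> Q" using p0 by simp
        thus False using k i by auto
      qed
      thus "F k = 0" by (rule Fz)
    qed
  qed simp
  also have "\<dots> = (\<Sum>i\<le>Q. F (p ^ \<beta> * i))"
    by (subst sum.reindex) (use p0 in \<open>auto simp: inj_on_def\<close>)
  finally have "cls (p ^ \<alpha>) Yp s - cls (p ^ \<alpha>) Zp s = (\<Sum>i\<le>Q. F (p ^ \<beta> * i) - G i)"
    unfolding cY cZ by (simp add: sum_subtractf)
  also have "int p ^ (2 * (\<alpha> - \<beta>) - 1) dvd \<dots>"
  proof (rule dvd_sum)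
    fix i
    have sg: "(-1::int) ^ (p ^ \<beta> * i) = (-1) ^ i"
    proof -
      have "odd (p ^ \<beta>)" using odd by simp
      hence "(-1::int) ^ (p ^ \<beta>) = -1" by simp
      thus ?thesis by (simp add: power_mult)
    qed
    have ch: "int p ^ (2 * (\<alpha> - 1 - \<beta>) + 1) dvd int (p ^ (\<alpha> - 1) choose (p ^ \<beta> * i)) - int (p ^ (\<alpha> - 1 - \<beta>) choose i)"
      by (rule binom_cong_chain[OF pp odd]) (use ba in simp)
    have e1: "2 * (\<alpha> - 1 - \<beta>) + 1 = 2 * (\<alpha> - \<beta>) - 1" using ba by simp
    have e2: "\<alpha> - 1 - \<beta> = \<alpha> - \<beta> - 1" by simp
    have "F (p ^ \<beta> * i) - G i = (if [int (p ^ \<beta> * i) = s] (mod int (p ^ \<alpha>))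
        then (-1) ^ i * (int (q choose (p ^ \<beta> * i)) - int (Q choose i)) else 0)"
      unfolding F_def G_def sg by (simp add: algebra_simps)
    moreover have "int p ^ (2 * (\<alpha> - \<beta>) - 1) dvd (-1) ^ i * (int (q choose (p ^ \<beta> * i)) - int (Q choose i))"
    proof -
      from ch have "int p ^ (2 * (\<alpha> - \<beta>) - 1) dvd int (p ^ (\<alpha> - 1) choose (p ^ \<beta> * i)) - int (p ^ (\<alpha> - 1 - \<beta>) choose i)"
        by (simp only: e1)
      hence "int p ^ (2 * (\<alpha> - \<beta>) - 1) dvd int (q choose (p ^ \<beta> * i)) - int (Q choose i)"
        unfolding q_def Q_def e2 .
      thus ?thesis by (rule dvd_mult)
    qed
    ultimately show "int p ^ (2 * (\<alpha> - \<beta>) - 1) dvd F (p ^ \<beta> * i) - G i" by simp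
  qed
  finally show ?thesis .
qed

lemma strong:
  assumes odd: "odd p" and n: "n \<ge> 1" and s: "int p ^ \<beta> dvd s"
  shows "int p ^ ((n - 1) div (p - 1) + 2 * (\<alpha> - \<beta>) - 2) dvd cls (p ^ \<alpha>) (Yp ^ n - Zp ^ n) s"
proof -
  obtain H where H: "Yp - Zp = [:int p:] ^ (\<alpha> - \<beta>) * H" using YZ by (auto elim!: dvdE)
  define E where "E = (n - 1) div (p - 1) + 2 * (\<alpha> - \<beta>) - 2"
  define T where "T j = of_nat (n choose j) * ([:int p:] ^ (\<alpha> - \<beta>) * H) ^ j * Zp ^ (n - j)" for j
  have "{1..n} = insert 1 {2..n}" using n by auto
  hence "Yp ^ n - Zp ^ n = T 1 + (\<Sum>j\<in>{2..n}. T j)"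
    unfolding expand[OF H] T_def by simp
  moreover have T1: "T 1 = of_nat n * (Zp ^ (n - 1) * (Yp - Zp))"
    unfolding T_def H by (simp add: ac_simps)
  ultimately have split: "Yp ^ n - Zp ^ n = of_nat n * (Zp ^ (n - 1) * (Yp - Zp)) + (\<Sum>j\<in>{2..n}. T j)"
    by simp
  have rest: "Dv p (p ^ \<alpha>) E (\<Sum>j\<in>{2..n}. T j)"
  proof (rule Dv_sum)
    fix j assume j: "j \<in> {2..n}"
    have le: "E \<le> (\<alpha> - \<beta>) * j + (n - j - 1) div (p - 1)"
    proof -
      have "(n - 1) div (p - 1) \<le> (n - j - 1) div (p - 1) + j" using p2 by (intro arith_cn) simp
      moreover have "(\<alpha> - \<beta> - 1) * 2 + j \<le> (\<alpha> - \<beta>) * j" using ba j by (intro arith_kj) auto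
      moreover have "\<alpha> - \<beta> \<ge> 1" using ba by simp
      ultimately show ?thesis unfolding E_def by linarith
    qed
    show "Dv p (p ^ \<alpha>) E (T j)" unfolding T_def
      by (rule Dv_mono[OF le term_bound]) (use j in simp)
  qed
  have first: "int p ^ E dvd cls (p ^ \<alpha>) (Zp ^ (n - 1) * (Yp - Zp)) s"
    unfolding cls_mult[OF m0']
  proof (rule dvd_sum)
    fix t assume t: "t \<in> {..<p ^ \<alpha>}"
    show "int p ^ E dvd cls (p ^ \<alpha>) (Zp ^ (n - 1)) (int t) * cls (p ^ \<alpha>) (Yp - Zp) (s - int t)"
    proof (cases "int p ^ \<beta> dvd int t")
      case True
      have A: "int p ^ ((n - 1 - 1) div (p - 1)) dvd cls (p ^ \<alpha>) (Zp ^ (n - 1)) (int t)"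
        using J_Z[of "n - 1"] unfolding Dv_def by blast
      have "int p ^ \<beta> dvd s - int t" using s True by (rule dvd_diff)
      hence B: "int p ^ (2 * (\<alpha> - \<beta>) - 1) dvd cls (p ^ \<alpha>) (Yp - Zp) (s - int t)"
        unfolding cls_diff by (rule delta_strong[OF odd])
      have "int p ^ ((n - 1 - 1) div (p - 1) + (2 * (\<alpha> - \<beta>) - 1)) dvd
          cls (p ^ \<alpha>) (Zp ^ (n - 1)) (int t) * cls (p ^ \<alpha>) (Yp - Zp) (s - int t)"
        unfolding power_add by (rule mult_dvd_mono[OF A B])
      moreover have "E \<le> (n - 1 - 1) div (p - 1) + (2 * (\<alpha> - \<beta>) - 1)"
      proof -
        have "(n - 1) div (p - 1) \<le> (n - 1 - 1) div (p - 1) + 1" using p2 by (intro arith_cn) simp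
        moreover have "\<alpha> - \<beta> \<ge> 1" using ba by simp
        ultimately show ?thesis unfolding E_def by linarith
      qed
      ultimately show ?thesis using le_imp_power_dvd dvd_trans by blast
    next
      case False
      have "Zp ^ (n - 1) = (1 - monom 1 (p ^ \<beta>)) ^ (p ^ (\<alpha> - \<beta> - 1) * (n - 1))"
        by (simp add: power_mult)
      moreover have "cls (p ^ \<alpha>) ((1 - monom 1 (p ^ \<beta>)) ^ (p ^ (\<alpha> - \<beta> - 1) * (n - 1))) (int t) = 0"
        by (rule cls_support) (use ba False in \<open>simp_all add: le_imp_power_dvd\<close>)
      ultimately show ?thesis by simp
    qed
  qed
  have "int p ^ E dvd cls (p ^ \<alpha>) (of_nat n * (Zp ^ (n - 1) * (Yp - Zp))) s"
    unfolding cls_of_nat_mult using first by simp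
  moreover have "int p ^ E dvd cls (p ^ \<alpha>) (\<Sum>j\<in>{2..n}. T j) s" using rest unfolding Dv_def by blast
  ultimately have "int p ^ E dvd cls (p ^ \<alpha>) (Yp ^ n - Zp ^ n) s"
    unfolding split cls_add by (rule dvd_add)
  thus ?thesis unfolding E_def .
qed

end

lemma S_exp_pos:
  assumes "prime p" "n \<ge> 1"
  shows "S_exp p n = int ((n - 1) div (p - 1))"
proof -
  have "p \<ge> 1" using assms(1) prime_ge_1_nat by blast
  hence e1: "int n - 1 = int (n - 1)" and e2: "int p - 1 = int (p - 1)" using assms(2) by auto
  have "S_exp p n = int (n - 1) div int (p - 1)" unfolding S_exp_def by (simp only: e1 e2)
  also have "\<dots> = int ((n - 1) div (p - 1))" by (rule zdiv_int[symmetric])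
  finally show ?thesis .
qed

lemma S_exp_0:
  assumes "prime p"
  shows "S_exp p 0 = -1"
proof -
  have "p \<ge> 2" using assms prime_ge_2_nat by blast
  hence "int p - 1 > 0" by simp
  thus ?thesis unfolding S_exp_def by (simp add: div_eq_minus1)
qed

lemma S_pos:
  assumes "prime p" "n \<ge> 1"
  shows "S p g n s = S_sum p g n s div int p ^ ((n - 1) div (p - 1))"
  unfolding S_def S_exp_pos[OF assms] by simp

lemma S_zero:
  assumes "prime p"
  shows "S p g 0 s = S_sum p g 0 s * int p"
  unfolding S_def S_exp_0[OF assms] by simp

lemma fleck:
  assumes pp: "prime p" and g: "g \<ge> 1"
  shows "int p ^ ((n - 1) div (p - 1)) dvd S_sum p g n s"
proof -
  have p0: "p > 0" using pp prime_gt_0_nat by blast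
  have mq: "p ^ g = p * p ^ (g - 1)" using g by (cases g) auto
  have "[:int p:] dvd (1 - monom 1 1) ^ (p ^ (g - 1)) - (1 - (monom 1 1 :: int poly) ^ (p ^ (g - 1)))"
    by (rule frob[OF pp])
  moreover have "(monom 1 1 :: int poly) ^ (p ^ (g - 1)) = monom 1 (p ^ (g - 1))" by (simp add: monom_power)
  ultimately obtain a where "(1 - monom 1 1 :: int poly) ^ (p ^ (g - 1)) - (1 - monom 1 (p ^ (g - 1))) = [:int p:] * a"
    by (auto elim!: dvdE)
  hence a: "(1 - monom 1 1 :: int poly) ^ (p ^ (g - 1)) = (1 - monom 1 (p ^ (g - 1))) + [:int p:] * a"
    by (simp add: algebra_simps)
  have "Dv p (p ^ g) ((n - 1) div (p - 1)) (((1 - monom 1 1 :: int poly) ^ (p ^ (g - 1))) ^ n)"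
    by (rule J_bound[OF pp _ mq refl a]) (use p0 in simp)
  thus ?thesis unfolding S_sum_cls Dv_def by (simp add: power_mult)
qed

lemma cong_shift_iff:
  assumes "\<beta> \<le> \<alpha>" "p > 0"
  shows "[int (p ^ \<beta> * i) = int p ^ \<beta> * r] (mod int (p ^ \<alpha>)) \<longleftrightarrow> [int i = r] (mod int (p ^ (\<alpha> - \<beta>)))"
proof -
  have e: "int (p ^ \<alpha>) = int p ^ \<beta> * int p ^ (\<alpha> - \<beta>)"
    using assms(1) by (simp add: power_add[symmetric])
  have "int (p ^ \<beta> * i) - int p ^ \<beta> * r = int p ^ \<beta> * (int i - r)" by (simp add: algebra_simps)
  thus ?thesis unfolding cong_iff_dvd_diff e using assms(2) by simp
qed

lemma S_sum_Z:
  assumes "\<beta> \<le> \<alpha>" "p > 0"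
  shows "S_sum p (\<alpha> - \<beta>) n r = cls (p ^ \<alpha>) ((1 - monom 1 (p ^ \<beta>)) ^ (p ^ (\<alpha> - \<beta> - 1) * n)) (int p ^ \<beta> * r)"
  unfolding S_sum_cls cls_binom using cong_shift_iff[OF assms] by simp

lemma S_sum_zero_shift:
  assumes "\<beta> \<le> \<alpha>" "p > 0"
  shows "S_sum p \<alpha> 0 (int p ^ \<beta> * r) = S_sum p (\<alpha> - \<beta>) 0 r"
  unfolding S_sum_Z[OF assms] unfolding S_sum_cls by simp

lemma div_cong_int:
  assumes c: "(c::int) \<noteq> 0" and a: "c dvd a" and b: "c dvd b" and d: "c * d dvd a - b"
  shows "d dvd a div c - b div c"
proof -
  obtain a' b' where "a = c * a'" "b = c * b'" using a b by (auto elim!: dvdE)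
  moreover have "a - b = c * (a' - b')" if "a = c * a'" "b = c * b'" using that by (simp add: algebra_simps)
  ultimately show ?thesis using d c by simp
qed

lemma cong_main:
  assumes pp: "prime p" and b1: "\<beta> \<ge> 1" and ba: "\<beta> < \<alpha>" and n: "n \<ge> 1"
  shows "int p ^ ((2 - (if p = 2 then 1 else 0)) * (\<alpha> - \<beta> - 1)) dvd
           S p \<alpha> n (int p ^ \<beta> * r) - S p (\<alpha> - \<beta>) n r"
proof -
  have p0: "p > 0" using pp prime_gt_0_nat by blast
  define e where "e = (n - 1) div (p - 1)"
  define d where "d = (2 - (if p = 2 then 1 else 0)) * (\<alpha> - \<beta> - 1)"
  define S1 where "S1 = S_sum p \<alpha> n (int p ^ \<beta> * r)"
  define S2 where "S2 = S_sum p (\<alpha> - \<beta>) n r"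
  have c1: "S1 = cls (p ^ \<alpha>) (((1 - monom 1 1) ^ (p ^ (\<alpha> - 1))) ^ n) (int p ^ \<beta> * r)"
    unfolding S1_def S_sum_cls by (simp add: power_mult)
  have c2: "S2 = cls (p ^ \<alpha>) (((1 - monom 1 (p ^ \<beta>)) ^ (p ^ (\<alpha> - \<beta> - 1))) ^ n) (int p ^ \<beta> * r)"
    unfolding S2_def using S_sum_Z[of \<beta> \<alpha> p n r] ba p0 by (simp add: power_mult)
  have diff: "S1 - S2 = cls (p ^ \<alpha>) (((1 - monom 1 1) ^ (p ^ (\<alpha> - 1))) ^ n - ((1 - monom 1 (p ^ \<beta>)) ^ (p ^ (\<alpha> - \<beta> - 1))) ^ n) (int p ^ \<beta> * r)"
    unfolding c1 c2 cls_diff ..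
  have main: "int p ^ (e + d) dvd S1 - S2"
  proof (cases "p = 2")
    case True
    have "Dv p (p ^ \<alpha>) ((n - 1) div (p - 1) + (\<alpha> - \<beta>) - 1)
      (((1 - monom 1 1) ^ (p ^ (\<alpha> - 1))) ^ n - ((1 - monom 1 (p ^ \<beta>)) ^ (p ^ (\<alpha> - \<beta> - 1))) ^ n)"
      by (rule weak[OF pp b1 ba])
    moreover have "(n - 1) div (p - 1) + (\<alpha> - \<beta>) - 1 = e + d" unfolding e_def d_def using True ba by simp
    ultimately show ?thesis unfolding diff Dv_def by simp
  next
    case False
    hence odd: "odd p" using prime_two_or_odd[OF pp] by simp
    have "int p ^ ((n - 1) div (p - 1) + 2 * (\<alpha> - \<beta>) - 2) dvd
       cls (p ^ \<alpha>) (((1 - monom 1 1) ^ (p ^ (\<alpha> - 1))) ^ n - ((1 - monom 1 (p ^ \<beta>)) ^ (p ^ (\<alpha> - \<beta> - 1))) ^ n) (int p ^ \<beta> * r)"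
      by (rule strong[OF pp b1 ba odd n]) simp
    moreover have "(n - 1) div (p - 1) + 2 * (\<alpha> - \<beta>) - 2 = e + d" unfolding e_def d_def using False ba by simp
    ultimately show ?thesis unfolding diff by simp
  qed
  have f1: "int p ^ e dvd S1" unfolding S1_def e_def by (rule fleck[OF pp]) (use ba in simp)
  have f2: "int p ^ e dvd S2" unfolding S2_def e_def by (rule fleck[OF pp]) (use ba in simp)
  have "int p ^ d dvd S1 div int p ^ e - S2 div int p ^ e"
    by (rule div_cong_int[OF _ f1 f2]) (use main p0 in \<open>simp_all add: power_add\<close>)
  thus ?thesis unfolding S_pos[OF pp n] S1_def S2_def e_def d_def .
qed

lemma level2:
  assumes pp: "prime p" and g: "\<gamma> \<ge> 2" and nr: "\<not> [r = 0] (mod int p)" and n: "n \<ge> 1"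
  shows "int p ^ (\<gamma> - 2) dvd S p \<gamma> n r"
proof -
  have p0: "p > 0" using pp prime_gt_0_nat by blast
  define e where "e = (n - 1) div (p - 1)"
  have W: "Dv p (p ^ \<gamma>) ((n - 1) div (p - 1) + (\<gamma> - 1) - 1)
      (((1 - monom 1 1) ^ (p ^ (\<gamma> - 1))) ^ n - ((1 - monom 1 (p ^ 1)) ^ (p ^ (\<gamma> - 1 - 1))) ^ n)"
    by (rule weak[OF pp]) (use g in auto)
  have Z0: "cls (p ^ \<gamma>) (((1 - monom 1 (p ^ 1)) ^ (p ^ (\<gamma> - 1 - 1))) ^ n) r = 0"
  proof -
    have "cls (p ^ \<gamma>) ((1 - monom 1 (p ^ 1)) ^ (p ^ (\<gamma> - 1 - 1) * n)) r = 0"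
    proof (rule cls_support)
      show "p ^ 1 dvd p ^ \<gamma>" using g by (intro le_imp_power_dvd) simp
      show "\<not> int (p ^ 1) dvd r" using nr by (simp add: cong_0_iff)
    qed
    thus ?thesis by (simp add: power_mult)
  qed
  have "int p ^ (e + (\<gamma> - 2)) dvd S_sum p \<gamma> n r"
  proof -
    have "int p ^ ((n - 1) div (p - 1) + (\<gamma> - 1) - 1) dvd
        cls (p ^ \<gamma>) (((1 - monom 1 1) ^ (p ^ (\<gamma> - 1))) ^ n - ((1 - monom 1 (p ^ 1)) ^ (p ^ (\<gamma> - 1 - 1))) ^ n) r"
      using W unfolding Dv_def by blast
    moreover have "(n - 1) div (p - 1) + (\<gamma> - 1) - 1 = e + (\<gamma> - 2)" unfolding e_def using g by simp
    moreover have "S_sum p \<gamma> n r = cls (p ^ \<gamma>) (((1 - monom 1 1) ^ (p ^ (\<gamma> - 1))) ^ n) r"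
      unfolding S_sum_cls by (simp add: power_mult)
    ultimately show ?thesis using Z0 by (simp add: cls_diff)
  qed
  then obtain k where k0: "S_sum p \<gamma> n r = int p ^ (e + (\<gamma> - 2)) * k" by (rule dvdE)
  hence k: "S_sum p \<gamma> n r = int p ^ e * (int p ^ (\<gamma> - 2) * k)" by (simp add: power_add mult.assoc)
  have "S p \<gamma> n r = int p ^ (\<gamma> - 2) * k"
    unfolding S_pos[OF pp n] k e_def[symmetric] using p0 by simp
  thus ?thesis by simp
qed

theorem corollary3p1:
  fixes p \<alpha> \<beta> n :: nat and r :: int
  assumes "prime p" and "\<alpha> > \<beta>"
  shows "[S p \<alpha> n (int p ^ \<beta> * r) = S p (\<alpha> - \<beta>) n r]
           (mod (int p ^ ((2 - (if p = 2 then 1 else 0)) * (\<alpha> - \<beta> - 1))))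
       \<and> (\<not> [r = 0] (mod int p) \<longrightarrow>
            S p \<alpha> n (int p ^ \<beta> * r) = 0 \<or>
            int (multiplicity (int p) (S p \<alpha> n (int p ^ \<beta> * r))) \<ge> int \<alpha> - int \<beta> - 2)"
proof -
  note pp = assms(1) and ba = assms(2)
  have p0: "p > 0" using pp prime_gt_0_nat by blast
  have p2: "p \<ge> 2" using pp prime_ge_2_nat by blast
  have sz: "S_sum p \<alpha> 0 (int p ^ \<beta> * r) = S_sum p (\<alpha> - \<beta>) 0 r"
    by (rule S_sum_zero_shift) (use ba p0 in auto)
  define d where "d = (2 - (if p = 2 then 1 else 0)) * (\<alpha> - \<beta> - 1)"
  have cong: "[S p \<alpha> n (int p ^ \<beta> * r) = S p (\<alpha> - \<beta>) n r] (mod (int p ^ d))"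
  proof (cases "n = 0")
    case True
    have "S p \<alpha> n (int p ^ \<beta> * r) = S p (\<alpha> - \<beta>) n r"
      unfolding True S_zero[OF pp] sz by simp
    thus ?thesis by simp
  next
    case False
    hence n: "n \<ge> 1" by simp
    show ?thesis
    proof (cases "\<beta> = 0")
      case True thus ?thesis by simp
    next
      case False
      hence "\<beta> \<ge> 1" by simp
      from cong_main[OF pp this ba n, of r] show ?thesis
        unfolding d_def cong_iff_dvd_diff .
    qed
  qed
  have part2: "S p \<alpha> n (int p ^ \<beta> * r) = 0 \<or>
            int (multiplicity (int p) (S p \<alpha> n (int p ^ \<beta> * r))) \<ge> int \<alpha> - int \<beta> - 2"
    if nr: "\<not> [r = 0] (mod int p)"
  proof (cases "n = 0")
    case True
    have "S_sum p (\<alpha> - \<beta>) 0 r = 0"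
    proof -
      have "\<not> [0 = r] (mod int (p ^ (\<alpha> - \<beta>)))"
      proof
        assume "[0 = r] (mod int (p ^ (\<alpha> - \<beta>)))"
        hence "int p ^ (\<alpha> - \<beta>) dvd 0 - r" by (simp add: cong_iff_dvd_diff)
        hence "int p ^ (\<alpha> - \<beta>) dvd r" by simp
        moreover have "int p dvd int p ^ (\<alpha> - \<beta>)" using ba by (simp add: dvd_power)
        ultimately have "int p dvd r" using dvd_trans by blast
        thus False using nr by (simp add: cong_0_iff)
      qed
      thus ?thesis unfolding S_sum_cls using cls_monom[of "p ^ (\<alpha> - \<beta>)" 1 0 r] by simp
    qed
    hence "S p \<alpha> n (int p ^ \<beta> * r) = 0"
      unfolding True S_zero[OF pp] sz by simp
    thus ?thesis by simp
  next
    case False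
    hence n: "n \<ge> 1" by simp
    have dv: "int p ^ (\<alpha> - \<beta> - 2) dvd S p \<alpha> n (int p ^ \<beta> * r)"
    proof (cases "\<alpha> - \<beta> \<ge> 2")
      case False thus ?thesis by simp
    next
      case True
      have l: "int p ^ (\<alpha> - \<beta> - 2) dvd S p (\<alpha> - \<beta>) n r" by (rule level2[OF pp True nr n])
      have "\<alpha> - \<beta> - 2 \<le> d" unfolding d_def by auto
      hence "int p ^ (\<alpha> - \<beta> - 2) dvd S p \<alpha> n (int p ^ \<beta> * r) - S p (\<alpha> - \<beta>) n r"
        using cong unfolding cong_iff_dvd_diff using le_imp_power_dvd dvd_trans by blast
      hence "int p ^ (\<alpha> - \<beta> - 2) dvd (S p \<alpha> n (int p ^ \<beta> * r) - S p (\<alpha> - \<beta>) n r) + S p (\<alpha> - \<beta>) n r"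
        using l by (rule dvd_add)
      thus ?thesis by simp
    qed
    show ?thesis
    proof (cases "S p \<alpha> n (int p ^ \<beta> * r) = 0")
      case True thus ?thesis by simp
    next
      case False
      have nu: "\<not> is_unit (int p)" using p2 by simp
      have "multiplicity (int p) (S p \<alpha> n (int p ^ \<beta> * r)) \<ge> \<alpha> - \<beta> - 2"
        by (rule multiplicity_geI[OF False nu dv])
      hence "int (multiplicity (int p) (S p \<alpha> n (int p ^ \<beta> * r))) \<ge> int (\<alpha> - \<beta> - 2)" by simp
      moreover have "int (\<alpha> - \<beta> - 2) \<ge> int \<alpha> - int \<beta> - 2" by simp
      ultimately show ?thesis by linarith
    qed
  qed
  show ?thesis using cong part2 unfolding d_def by blast
qed

end
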